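(* Let $\alpha>0$ and let $\beta:[0,\infty)\to(0,\infty)$ be continuous. Let $S_0>0$, $I_0\ge 0$, and let $(S(t),I(t),R(t))$ be the solution of $$\dot S=-\frac{\beta(t)SI}{S+I},\qquad \dot I=\frac{\beta(t)SI}{S+I}-\alpha I,\qquad \dot R=\alpha I$$ with $S(0)=S_0$, $I(0)=I_0$. Then, for $t\ge 0$, $$\frac{I(t)}{S(t)}=y(t):=\frac{I_0}{S_0}\exp\left(\int_0^t(\beta(s)-\alpha)\,ds\right),$$ $$S(t)=S_0\exp\left(-\int_0^t\frac{\beta(s)y(s)}{1+y(s)}\,ds\right),\qquad I(t)=S(t)\,y(t).$$
   Context: Modified SIR epidemiological model with constant recovery rate $\alpha$ and time-dependent transmission rate $\beta(t)$; $S,I,R$ are fractions of susceptible, infective and removed individuals. *)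

theory Defs
  imports "HOL-Analysis.Analysis"
begin

definition sir_y :: "real \<Rightarrow> (real \<Rightarrow> real) \<Rightarrow> real \<Rightarrow> real \<Rightarrow> real \<Rightarrow> real" where
  "sir_y \<alpha> \<beta> S0 I0 t = I0 / S0 * exp (integral {0..t} (\<lambda>s. \<beta> s - \<alpha>))"

end

theory Submission
  imports Defs
begin

lemma int_deriv:
  fixes f :: "real \<Rightarrow> real"
  assumes "continuous_on {0..} f" "x \<ge> 0"
  shows "((\<lambda>u. integral {0..u} f) has_real_derivative f x) (at x within {0..})"
proof -
  have "continuous_on {0..x+1} f" using assms(1) by (rule continuous_on_subset) auto
  then have "((\<lambda>u. integral {0..u} f) has_real_derivative f x) (at x within {0..x+1})"
    using integral_has_vector_derivative[of 0 "x+1" f x] assms(2)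
    by (simp add: has_real_derivative_iff_has_vector_derivative)
  moreover have "at x within {0..x+1} = at x within {0..}"
    by (rule at_within_nhd[where S="{..<x+1}"]) auto
  ultimately show ?thesis by simp
qed

theorem mainTheorem4:
  fixes \<alpha> S0 I0 :: real and \<beta> S I R :: "real \<Rightarrow> real"
  assumes alpha_pos: "\<alpha> > 0"
    and beta_cont: "continuous_on {0..} \<beta>"
    and beta_pos: "\<And>t. t \<ge> 0 \<Longrightarrow> \<beta> t > 0"
    and S0_pos: "S0 > 0" and I0_nonneg: "I0 \<ge> 0"
    and init: "S 0 = S0" "I 0 = I0"
    and defined: "\<And>t. t \<ge> 0 \<Longrightarrow> S t + I t \<noteq> 0"
    and dS: "\<And>t. t \<ge> 0 \<Longrightarrow>
       (S has_real_derivative (- (\<beta> t * S t * I t / (S t + I t)))) (at t within {0..})"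
    and dI: "\<And>t. t \<ge> 0 \<Longrightarrow>
       (I has_real_derivative (\<beta> t * S t * I t / (S t + I t) - \<alpha> * I t)) (at t within {0..})"
    and dR: "\<And>t. t \<ge> 0 \<Longrightarrow>
       (R has_real_derivative (\<alpha> * I t)) (at t within {0..})"
  shows "\<forall>t\<ge>0.
     I t / S t = sir_y \<alpha> \<beta> S0 I0 t \<and>
     S t = S0 * exp (- integral {0..t}
              (\<lambda>s. \<beta> s * sir_y \<alpha> \<beta> S0 I0 s / (1 + sir_y \<alpha> \<beta> S0 I0 s))) \<and>
     I t = S t * sir_y \<alpha> \<beta> S0 I0 t"
proof -
  define Y where "Y = sir_y \<alpha> \<beta> S0 I0"
  define H where "H = {0::real..}"
  have Scont: "continuous_on {0..} S" by (rule DERIV_continuous_on[OF dS]) auto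
  have Icont: "continuous_on {0..} I" by (rule DERIV_continuous_on[OF dI]) auto
  have cbm: "continuous_on {0..} (\<lambda>s. \<beta> s - \<alpha>)"
    by (intro continuous_intros beta_cont)
  have dY: "(Y has_real_derivative (\<beta> x - \<alpha>) * Y x) (at x within {0..})"
    if "x \<ge> 0" for x
  proof -
    have Yeq: "Y = (\<lambda>u. I0 / S0 * exp (integral {0..u} (\<lambda>s. \<beta> s - \<alpha>)))"
      by (auto simp: Y_def sir_y_def)
    have "((\<lambda>u. I0 / S0 * exp (integral {0..u} (\<lambda>s. \<beta> s - \<alpha>))) has_real_derivative
       (\<beta> x - \<alpha>) * (I0 / S0 * exp (integral {0..x} (\<lambda>s. \<beta> s - \<alpha>)))) (at x within {0..})"
      using int_deriv[OF cbm that] by (intro derivative_eq_intros) (auto simp: algebra_simps)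
    then show ?thesis unfolding Yeq by simp
  qed
  have Ycont: "continuous_on {0..} Y" by (rule DERIV_continuous_on[OF dY]) auto
  have Ynn: "Y x \<ge> 0" for x unfolding Y_def sir_y_def using S0_pos I0_nonneg by simp
  have Y0: "Y 0 = I0 / S0" unfolding Y_def sir_y_def by simp
  define c where "c x = \<beta> x * S x / (S x + I x) - \<alpha>" for x
  have ccont: "continuous_on {0..} c" unfolding c_def
    by (intro continuous_intros beta_cont Scont Icont) (use defined in auto)
  define C where "C x = integral {0..x} c" for x
  define Q where "Q x = I x - Y x * S x" for x
  define g where "g x = Q x * exp (- C x)" for x
  have dg: "(g has_real_derivative 0) (at x within {0..})" if x: "x \<ge> 0" for x
  proof -
    have d1: "(g has_real_derivative
      ((\<beta> x * S x * I x / (S x + I x) - \<alpha> * I x) - ((\<beta> x - \<alpha>) * Y x * S x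
         + Y x * (- (\<beta> x * S x * I x / (S x + I x))))) * exp (- C x)
       + Q x * (exp (- C x) * (- c x))) (at x within {0..})"
      unfolding g_def Q_def[abs_def] C_def[abs_def]
      by (rule derivative_eq_intros dI[OF x] dY[OF x] dS[OF x] int_deriv[OF ccont x] refl | simp add: algebra_simps)+
    have e1: "((\<beta> x * S x * I x / (S x + I x) - \<alpha> * I x) - ((\<beta> x - \<alpha>) * Y x * S x
         + Y x * (- (\<beta> x * S x * I x / (S x + I x))))) = c x * Q x"
    proof -
      define k where "k = \<beta> x * S x / (S x + I x)"
      have kk: "k * (S x + I x) = \<beta> x * S x" using defined[OF x] unfolding k_def by simp
      have P: "\<beta> x * S x * I x / (S x + I x) = k * I x" unfolding k_def by simp
      have "(k * I x - \<alpha> * I x) - ((\<beta> x - \<alpha>) * Y x * S x + Y x * (- (k * I x)))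
           = (k - \<alpha>) * (I x - Y x * S x) + Y x * (k * (S x + I x) - \<beta> x * S x)"
        by (simp add: algebra_simps)
      then show ?thesis unfolding P c_def Q_def k_def[symmetric] kk by simp
    qed
    show ?thesis using d1 unfolding e1 by (simp add: algebra_simps)
  qed
  have g0: "g 0 = 0" unfolding g_def Q_def using init Y0 S0_pos by simp
  have gconst: "g x = 0" if "x \<ge> 0" for x
  proof -
    obtain k where "\<forall>x\<in>{0..}. g x = k"
      using has_field_derivative_zero_constant[of "{0::real..}" g] dg by auto
    then show ?thesis using g0 that by force
  qed
  have IYS: "I x = Y x * S x" if "x \<ge> 0" for x
    using gconst[OF that] unfolding g_def Q_def by simp
  have Snz: "S x \<noteq> 0" if "x \<ge> 0" for x using defined[OF that] IYS[OF that] by auto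
  define d where "d s = \<beta> s * Y s / (1 + Y s)" for s
  have dcont: "continuous_on {0..} d" unfolding d_def
    by (intro continuous_intros beta_cont Ycont) (use Ynn in \<open>auto simp: add_nonneg_eq_0_iff\<close>)
  define D where "D x = integral {0..x} d" for x
  define h where "h x = S x * exp (D x)" for x
  have dh: "(h has_real_derivative 0) (at x within {0..})" if x: "x \<ge> 0" for x
  proof -
    have "(h has_real_derivative
      (- (\<beta> x * S x * I x / (S x + I x))) * exp (D x) + S x * (exp (D x) * d x)) (at x within {0..})"
      unfolding h_def D_def[abs_def]
      by (rule derivative_eq_intros dS[OF x] int_deriv[OF dcont x] refl | simp add: algebra_simps)+
    moreover have "- (\<beta> x * S x * I x / (S x + I x)) + S x * d x = 0"
    proof -
      have "1 + Y x \<noteq> 0" using Ynn[of x] by linarith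
      then have "S x + S x * Y x \<noteq> 0" using Snz[OF x]
        by (metis distrib_left mult_1_right no_zero_divisors)
      with \<open>1 + Y x \<noteq> 0\<close> show ?thesis
        unfolding d_def IYS[OF x] using Snz[OF x] by (simp add: field_simps)
    qed
    moreover have "(- (\<beta> x * S x * I x / (S x + I x))) * exp (D x) + S x * (exp (D x) * d x)
       = exp (D x) * (- (\<beta> x * S x * I x / (S x + I x)) + S x * d x)"
      by (simp add: algebra_simps)
    ultimately show ?thesis by simp
  qed
  have h0: "h 0 = S0" unfolding h_def D_def using init by simp
  have hconst: "h x = S0" if "x \<ge> 0" for x
  proof -
    obtain k where "\<forall>x\<in>{0..}. h x = k"
      using has_field_derivative_zero_constant[of "{0::real..}" h] dh by auto
    then show ?thesis using h0 that by force
  qed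
  show ?thesis
  proof (intro allI impI conjI)
    fix t :: real assume t: "t \<ge> 0"
    show "I t / S t = sir_y \<alpha> \<beta> S0 I0 t" using IYS[OF t] Snz[OF t] Y_def by simp
    show "I t = S t * sir_y \<alpha> \<beta> S0 I0 t" using IYS[OF t] Y_def by simp
    have "S t = S0 * exp (- D t)" using hconst[OF t] unfolding h_def
      by (simp add: exp_minus field_simps)
    then show "S t = S0 * exp (- integral {0..t}
              (\<lambda>s. \<beta> s * sir_y \<alpha> \<beta> S0 I0 s / (1 + sir_y \<alpha> \<beta> S0 I0 s)))"
      unfolding D_def d_def Y_def .
  qed
qed

end
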